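(* Let $r\ge 2$ and $n\ge 1$, let $V$ be a set of $rn$ vertices, and let $\mathcal{E}$ be the set of all $r$-element subsets of $V$. Choose elements of $\mathcal{E}$ one at a time in a uniformly random order (without repetition), stopping as soon as every vertex of $V$ lies in at least one chosen element; let $G_\omega$ be the resulting $r$-uniform hypergraph on $V$. Then the expected number of matchings in $G_\omega$ is $$\frac{(rn)!}{(r!)^n\, n!}\sum_{i=1}^r (-1)^{i-1}\frac{\binom{r}{i}}{\binom{\binom{nr}{r}-\binom{nr-i}{r}+n-1}{n}}.$$
   Context: A matching in an $r$-uniform hypergraph on vertex set $V$ is a set $M$ of its edges such that every vertex of $V$ lies in exactly one edge of $M$. *)

theory Defs
  imports "HOL-Probability.Probability" "HOL-Combinatorics.Multiset_Permutations"
begin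

definition all_edges :: "'a set \<Rightarrow> nat \<Rightarrow> 'a set set" where
  "all_edges V r = {e. e \<subseteq> V \<and> card e = r}"

definition stop_time :: "'a set \<Rightarrow> 'a set list \<Rightarrow> nat" where
  "stop_time V xs = (LEAST k. \<Union>(set (take k xs)) = V)"

definition stopped_graph :: "'a set \<Rightarrow> 'a set list \<Rightarrow> 'a set set" where
  "stopped_graph V xs = set (take (stop_time V xs) xs)"

definition is_matching :: "'a set \<Rightarrow> 'a set set \<Rightarrow> 'a set set \<Rightarrow> bool" where
  "is_matching V H M \<longleftrightarrow> M \<subseteq> H \<and> (\<forall>v\<in>V. \<exists>!e. e \<in> M \<and> v \<in> e)"

definition num_matchings :: "'a set \<Rightarrow> 'a set set \<Rightarrow> nat" where
  "num_matchings V H = card {M. is_matching V H M}"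

end

theory Submission
  imports Defs
begin


fun pos :: "'a list \<Rightarrow> 'a \<Rightarrow> nat" where
  "pos [] f = 0"
| "pos (x # xs) f = (if x = f then 0 else Suc (pos xs f))"

lemma pos_lt: "f \<in> set xs \<Longrightarrow> pos xs f < length xs"
  by (induction xs) auto

lemma nth_pos: "f \<in> set xs \<Longrightarrow> xs ! pos xs f = f"
  by (induction xs) auto

lemma pos_inj: "f \<in> set xs \<Longrightarrow> g \<in> set xs \<Longrightarrow> pos xs f = pos xs g \<Longrightarrow> f = g"
  by (metis nth_pos)

lemma in_take_pos: "distinct xs \<Longrightarrow> f \<in> set (take k xs) \<longleftrightarrow> f \<in> set xs \<and> pos xs f < k"
proof (induction xs arbitrary: k)
  case Nil then show ?case by simp
next
  case (Cons x xs) then show ?case by (cases k) auto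
qed

definition PC :: "'a list \<Rightarrow> 'a set \<Rightarrow> 'a set \<Rightarrow> bool" where
  "PC xs M W \<longleftrightarrow> (\<forall>f\<in>W. \<forall>g\<in>M. pos xs g \<le> pos xs f)"

lemma PC_Cons: "PC (x # ys) M W \<longleftrightarrow> (x \<in> W \<longrightarrow> M \<subseteq> {x}) \<and> PC ys (M - {x}) (W - {x})"
  unfolding PC_def by auto

lemma card_perm_decomp:
  assumes "finite E" "E \<noteq> {}"
  shows "card {xs \<in> permutations_of_set E. Q xs} = (\<Sum>x\<in>E. card {ys \<in> permutations_of_set (E - {x}). Q (x # ys)})"
proof -
  have "{xs \<in> permutations_of_set E. Q xs} = (\<Union>x\<in>E. (\<lambda>ys. x # ys) ` {ys \<in> permutations_of_set (E - {x}). Q (x # ys)})"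
    using permutations_of_set_nonempty[OF assms(2)] by auto
  also have "card \<dots> = (\<Sum>x\<in>E. card ((\<lambda>ys. x # ys) ` {ys \<in> permutations_of_set (E - {x}). Q (x # ys)}))"
    by (rule card_UN_disjoint) (auto simp: assms)
  also have "\<dots> = (\<Sum>x\<in>E. card {ys \<in> permutations_of_set (E - {x}). Q (x # ys)})"
    by (intro sum.cong refl card_image) (auto simp: inj_on_def)
  finally show ?thesis .
qed

definition FF :: "nat \<Rightarrow> nat \<Rightarrow> nat \<Rightarrow> real" where
  "FF N m w = fact N * fact (m - 1) * fact (w - 1) / fact (m + w - 1)"

lemma FF_step:
  assumes "m \<ge> 1" "w \<ge> 1" "m + w - 1 \<le> Suc N"
  shows "real (Suc N - (m + w - 1)) * FF N m w + real (m - 1) * FF N (m - 1) w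
          + (if m = 1 then fact N else 0) = FF (Suc N) m w"
proof (cases "m = 1")
  case True
  obtain w0 where w: "w = Suc w0" using assms by (cases w) auto
  have "real (Suc N - w) = real (Suc N) - real w" using assms True by (simp add: of_nat_diff)
  moreover have "(fact w0::real) + fact w0 * real w0 > 0"
    by (simp add: add_pos_nonneg)
  ultimately show ?thesis using True w
    by (simp add: FF_def field_simps)
next
  case False
  then obtain m0 where m: "m = Suc (Suc m0)" using assms by (cases m; cases "m - 1") auto
  obtain w0 where w: "w = Suc w0" using assms by (cases w) auto
  have e: "real (Suc N - (m + w - 1)) = real (Suc N) - real (m0 + w0 + 2)"
    using assms m w by (simp add: of_nat_diff)
  define X where "X = fact N * fact m0 * fact w0 / (fact (m0 + w0 + 1) :: real)"
  define K where "K = real (m0 + w0 + 2)"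
  have K: "K > 0" by (simp add: K_def)
  have h1: "FF N m w = X * (real m0 + 1) / K"
    by (simp add: FF_def X_def K_def m w fact_Suc field_simps)
  have h2: "FF N (m - 1) w = X"
    by (simp add: FF_def X_def m w)
  have h3: "FF (Suc N) m w = (real N + 1) * X * (real m0 + 1) / K"
    by (simp add: FF_def X_def K_def m w fact_Suc field_simps)
  have e2: "real (Suc N - (m + w - 1)) = real N + 1 - K"
    using assms m w by (simp add: of_nat_diff K_def)
  show ?thesis unfolding h1 h2 h3 e2 using K m False
    by (simp add: field_simps)
qed

lemma count_order_aux:
  "card E = n \<Longrightarrow> finite E \<Longrightarrow> M \<subseteq> E \<Longrightarrow> W \<subseteq> E \<Longrightarrow> M \<inter> W = {e} \<Longrightarrow>
   real (card {xs \<in> permutations_of_set E. PC xs M W}) = FF (card E) (card M) (card W)"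
proof (induction n arbitrary: E M W e)
  case 0
  then show ?case by auto
next
  case (Suc N)
  note fin = \<open>finite E\<close>
  have eM: "e \<in> M" and eW: "e \<in> W" using Suc.prems by auto
  have Ene: "E \<noteq> {}" using Suc.prems by auto
  have finM: "finite M" using Suc.prems finite_subset by meson
  have finW: "finite W" using Suc.prems finite_subset by meson
  define m where "m = card M"
  define w where "w = card W"
  have m1: "m \<ge> 1" using eM finM by (auto simp: m_def Suc_le_eq card_gt_0_iff)
  have w1: "w \<ge> 1" using eW finW by (auto simp: w_def Suc_le_eq card_gt_0_iff)
  have cU: "card (M \<union> W) = m + w - 1"
    using card_Un_Int[OF finM finW] Suc.prems by (simp add: m_def w_def)
  have cUle: "m + w - 1 \<le> Suc N"
    using cU card_mono[OF fin, of "M \<union> W"] Suc.prems by auto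
  define h where "h x = real (card {ys \<in> permutations_of_set (E - {x}). PC (x # ys) M W})" for x
  have hx: "h x = (if x \<in> E - (M \<union> W) then FF N m w else 0) + (if x \<in> M - {e} then FF N (m - 1) w else 0)
              + (if x = e then (if m = 1 then fact N else 0) else 0)" if xE: "x \<in> E" for x
  proof -
    have cE: "card (E - {x}) = N" using Suc.prems xE by simp
    consider "x \<notin> M \<union> W" | "x \<in> M - {e}" | "x = e" | "x \<in> W - {e}" by blast
    then show ?thesis
    proof cases
      case 1
      then have "h x = real (card {ys \<in> permutations_of_set (E - {x}). PC ys M W})"
        unfolding h_def PC_Cons by (simp add: Diff_triv)
      also have "\<dots> = FF (card (E - {x})) (card M) (card W)"
        apply (rule Suc.IH[of "E - {x}" M W e])
        using cE Suc.prems 1 by auto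
      also have "\<dots> = FF N m w" using cE by (simp add: m_def w_def)
      finally show ?thesis using 1 xE eM by auto
    next
      case 2
      then have xW: "x \<notin> W" using Suc.prems by auto
      then have "h x = real (card {ys \<in> permutations_of_set (E - {x}). PC ys (M - {x}) W})"
        unfolding h_def PC_Cons by (simp add: Diff_triv)
      also have "\<dots> = FF (card (E - {x})) (card (M - {x})) (card W)"
        apply (rule Suc.IH[of "E - {x}" "M - {x}" W e])
        using cE Suc.prems 2 xW by auto
      also have "\<dots> = FF N (m - 1) w" using cE 2 finM by (simp add: m_def w_def)
      finally show ?thesis using 2 xE by auto
    next
      case 3
      show ?thesis
      proof (cases "m = 1")
        case True
        then have "M = {e}" using eM finM unfolding m_def by (metis card_1_singletonE singletonD)
        then have "h x = real (card (permutations_of_set (E - {x})))"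
          unfolding h_def PC_Cons using 3 by (simp add: PC_def)
        also have "\<dots> = fact N" using cE fin by simp
        finally show ?thesis using 3 True eW by auto
      next
        case False
        have "\<not> M \<subseteq> {e}"
        proof
          assume "M \<subseteq> {e}"
          then have "M = {e}" using eM by auto
          then show False using False by (simp add: m_def)
        qed
        then have "h x = 0" unfolding h_def PC_Cons using 3 eW by simp
        then show ?thesis using 3 False eW by auto
      qed
    next
      case 4
      then have "\<not> M \<subseteq> {x}" using eM by auto
      then have "h x = 0" unfolding h_def PC_Cons using 4 by simp
      then show ?thesis using 4 Suc.prems by auto
    qed
  qed
  have "real (card {xs \<in> permutations_of_set E. PC xs M W}) = (\<Sum>x\<in>E. h x)"
    unfolding h_def card_perm_decomp[OF fin Ene] by simp
  also have "\<dots> = (\<Sum>x\<in>E. (if x \<in> E - (M \<union> W) then FF N m w else 0) + (if x \<in> M - {e} then FF N (m - 1) w else 0)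
              + (if x = e then (if m = 1 then fact N else 0) else 0))"
    by (rule sum.cong) (auto simp: hx)
  also have "\<dots> = real (card (E - (M \<union> W))) * FF N m w + real (card (M - {e})) * FF N (m - 1) w
       + (if m = 1 then fact N else 0)"
  proof -
    have a: "(\<Sum>x\<in>E. (if x \<in> E - (M \<union> W) then FF N m w else 0)) = real (card (E - (M \<union> W))) * FF N m w"
      using sum.inter_restrict[OF fin, of "\<lambda>_. FF N m w" "E - (M \<union> W)", symmetric]
      by (simp add: Int_absorb1)
    have b: "(\<Sum>x\<in>E. (if x \<in> M - {e} then FF N (m - 1) w else 0)) = real (card (M - {e})) * FF N (m - 1) w"
    proof -
      have "E \<inter> (M - {e}) = M - {e}" using Suc.prems by auto
      then show ?thesis
        using sum.inter_restrict[OF fin, of "\<lambda>_. FF N (m - 1) w" "M - {e}", symmetric] by simp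
    qed
    have c: "(\<Sum>x\<in>E. (if x = e then (if m = 1 then fact N else 0) else 0)) = (if m = 1 then fact N else 0)"
      using eM Suc.prems by (auto simp add: sum.delta[OF fin])
    show ?thesis by (simp only: sum.distrib a b c)
  qed
  also have "\<dots> = FF (Suc N) m w"
  proof -
    have "card (E - (M \<union> W)) = Suc N - (m + w - 1)"
      using card_Diff_subset[of "M \<union> W" E] finM finW Suc.prems cU by simp
    moreover have "card (M - {e}) = m - 1" using eM finM by (simp add: m_def)
    ultimately show ?thesis using FF_step[OF m1 w1 cUle] by simp
  qed
  finally show ?case using Suc.prems by (simp add: m_def w_def)
qed

lemma count_order:
  "finite E \<Longrightarrow> M \<subseteq> E \<Longrightarrow> W \<subseteq> E \<Longrightarrow> M \<inter> W = {e} \<Longrightarrow>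
   real (card {xs \<in> permutations_of_set E. PC xs M W}) = FF (card E) (card M) (card W)"
  by (rule count_order_aux[OF refl])



lemma edges_cover:
  assumes "finite V" "1 \<le> r" "r \<le> card V" "v \<in> V"
  shows "\<exists>e \<in> all_edges V r. v \<in> e"
proof -
  have "r - 1 \<le> card (V - {v})" using assms by simp
  then obtain T where T: "T \<subseteq> V - {v}" "card T = r - 1" by (meson obtain_subset_with_card_n)
  have "finite T" using T assms finite_subset by (metis finite_Diff)
  moreover have "v \<notin> T" using T by auto
  ultimately have "card (insert v T) = r" using T assms by simp
  moreover have "insert v T \<subseteq> V" using T assms by auto
  ultimately have "insert v T \<in> all_edges V r" by (simp add: all_edges_def)
  then show ?thesis by blast
qed

lemma Union_edges:
  assumes "finite V" "1 \<le> r" "r \<le> card V"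
  shows "\<Union>(all_edges V r) = V"
  using edges_cover[OF assms] by (auto simp: all_edges_def)

lemma finite_edges: "finite V \<Longrightarrow> finite (all_edges V r)"
  unfolding all_edges_def by simp

lemma card_edges: "finite V \<Longrightarrow> card (all_edges V r) = card V choose r"
  unfolding all_edges_def by (simp add: n_subsets)

lemma stop_props:
  assumes "\<Union>(all_edges V r) = V" "xs \<in> permutations_of_set (all_edges V r)"
  shows "\<Union>(set (take (stop_time V xs) xs)) = V"
    and "\<Union>(set (take k xs)) = V \<Longrightarrow> stop_time V xs \<le> k"
proof -
  have "\<Union>(set (take (length xs) xs)) = V" using assms by (simp add: permutations_of_set_def)
  then show "\<Union>(set (take (stop_time V xs) xs)) = V"
    unfolding stop_time_def by (rule LeastI)
  show "\<Union>(set (take k xs)) = V \<Longrightarrow> stop_time V xs \<le> k"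
    unfolding stop_time_def by (rule Least_le)
qed

lemma char_stopped:
  assumes U: "\<Union>(all_edges V r) = V" and xs: "xs \<in> permutations_of_set (all_edges V r)"
    and M: "M \<subseteq> all_edges V r" "M \<noteq> {}" "finite M"
  shows "M \<subseteq> stopped_graph V xs \<longleftrightarrow>
         (\<exists>v\<in>V. \<forall>f\<in>all_edges V r. v \<in> f \<longrightarrow> (\<forall>g\<in>M. pos xs g \<le> pos xs f))"
proof -
  define E where "E = all_edges V r"
  have sx: "set xs = E" and dx: "distinct xs" using xs by (auto simp: permutations_of_set_def E_def)
  define T where "T = Max (pos xs ` M)"
  have Tge: "pos xs g \<le> T" if "g \<in> M" for g using M that by (simp add: T_def)
  have "T \<in> pos xs ` M" unfolding T_def using M by (intro Max_in) auto
  then obtain g0 where g0: "g0 \<in> M" "pos xs g0 = T" by auto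
  define \<tau> where "\<tau> = stop_time V xs"
  have s1: "M \<subseteq> stopped_graph V xs \<longleftrightarrow> T < \<tau>"
  proof
    assume "M \<subseteq> stopped_graph V xs"
    then have "g0 \<in> set (take \<tau> xs)" using g0 by (auto simp: stopped_graph_def \<tau>_def)
    then show "T < \<tau>" using g0 in_take_pos[OF dx] by auto
  next
    assume "T < \<tau>"
    show "M \<subseteq> stopped_graph V xs"
    proof
      fix g assume "g \<in> M"
      then have "g \<in> set xs" "pos xs g < \<tau>" using Tge[of g] M sx \<open>T < \<tau>\<close> by (auto simp: E_def)
      then show "g \<in> stopped_graph V xs"
        using in_take_pos[OF dx] unfolding stopped_graph_def \<tau>_def by blast
    qed
  qed
  have sub: "\<Union>(set (take k xs)) \<subseteq> V" for k
    using U sx set_take_subset[of k xs] unfolding E_def by blast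
  have s2: "T < \<tau> \<longleftrightarrow> \<Union>(set (take T xs)) \<noteq> V"
  proof
    assume "T < \<tau>"
    then show "\<Union>(set (take T xs)) \<noteq> V"
      using stop_props(2)[OF U xs, of T] by (auto simp: \<tau>_def)
  next
    assume a: "\<Union>(set (take T xs)) \<noteq> V"
    show "T < \<tau>"
    proof (rule ccontr)
      assume "\<not> T < \<tau>"
      then have "set (take \<tau> xs) \<subseteq> set (take T xs)" by (simp add: set_take_subset_set_take)
      then have "V \<subseteq> \<Union>(set (take T xs))" using stop_props(1)[OF U xs] unfolding \<tau>_def by blast
      then show False using a sub by blast
    qed
  qed
  have s3: "\<Union>(set (take T xs)) \<noteq> V \<longleftrightarrow> (\<exists>v\<in>V. \<forall>f\<in>set (take T xs). v \<notin> f)"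
    using sub[of T] by blast
  have s4: "(\<forall>f\<in>set (take T xs). v \<notin> f) \<longleftrightarrow> (\<forall>f\<in>E. v \<in> f \<longrightarrow> (\<forall>g\<in>M. pos xs g \<le> pos xs f))" for v
  proof -
    have "(\<forall>g\<in>M. pos xs g \<le> pos xs f) \<longleftrightarrow> T \<le> pos xs f" for f
      using Tge g0 by (metis order_trans)
    then show ?thesis using in_take_pos[OF dx] sx by auto
  qed
  show ?thesis unfolding s1 s2 s3 s4 E_def ..
qed



lemma sum_subsets_by_card:
  fixes g :: "nat \<Rightarrow> real"
  assumes "finite e"
  shows "(\<Sum>S | S \<subseteq> e \<and> S \<noteq> {}. g (card S)) = (\<Sum>i=1..card e. real (card e choose i) * g i)"
proof -
  have fin: "finite {S. S \<subseteq> e \<and> S \<noteq> {}}" using assms by simp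
  have img: "card ` {S. S \<subseteq> e \<and> S \<noteq> {}} \<subseteq> {1..card e}"
  proof
    fix k assume "k \<in> card ` {S. S \<subseteq> e \<and> S \<noteq> {}}"
    then obtain S where S: "S \<subseteq> e" "S \<noteq> {}" "k = card S" by auto
    have "finite S" using S assms finite_subset by blast
    then show "k \<in> {1..card e}" using S assms by (auto simp: card_mono Suc_le_eq card_gt_0_iff)
  qed
  have "(\<Sum>S | S \<subseteq> e \<and> S \<noteq> {}. g (card S)) =
        (\<Sum>i=1..card e. \<Sum>S\<in>{S. S \<in> {S. S \<subseteq> e \<and> S \<noteq> {}} \<and> card S = i}. g (card S))"
    by (rule sum.group[OF fin _ img, symmetric]) simp
  also have "\<dots> = (\<Sum>i=1..card e. real (card e choose i) * g i)"
  proof (rule sum.cong[OF refl])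
    fix i assume i: "i \<in> {1..card e}"
    have "{S. S \<in> {S. S \<subseteq> e \<and> S \<noteq> {}} \<and> card S = i} = {S. S \<subseteq> e \<and> card S = i}"
      using i by auto
    moreover have "card {S. S \<subseteq> e \<and> card S = i} = card e choose i" using assms by (rule n_subsets)
    ultimately show "(\<Sum>S\<in>{S. S \<in> {S. S \<subseteq> e \<and> S \<noteq> {}} \<and> card S = i}. g (card S)) = real (card e choose i) * g i"
      by simp
  qed
  finally show ?thesis .
qed

lemma matching_props:
  assumes "is_matching V (all_edges V r) M"
  shows "M \<subseteq> all_edges V r"
    and "\<Union>M = V"
    and "e \<in> M \<Longrightarrow> g \<in> M \<Longrightarrow> v \<in> e \<Longrightarrow> v \<in> g \<Longrightarrow> e = g"
proof -
  show Msub: "M \<subseteq> all_edges V r" using assms by (simp add: is_matching_def)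
  show "\<Union>M = V"
  proof
    show "\<Union>M \<subseteq> V" using Msub by (auto simp: all_edges_def)
    show "V \<subseteq> \<Union>M" using assms by (auto simp: is_matching_def)
  qed
  show "e \<in> M \<Longrightarrow> g \<in> M \<Longrightarrow> v \<in> e \<Longrightarrow> v \<in> g \<Longrightarrow> e = g"
  proof -
    assume a: "e \<in> M" "g \<in> M" "v \<in> e" "v \<in> g"
    then have "v \<in> V" using Msub by (auto simp: all_edges_def)
    then show "e = g" using assms a unfolding is_matching_def by blast
  qed
qed

lemma matching_card:
  assumes "is_matching V (all_edges V r) M" "finite V"
  shows "finite M" "card V = card M * r"
proof -
  note mp = matching_props[OF assms(1)]
  show finM: "finite M" using mp(1) finite_edges[OF assms(2)] finite_subset by blast
  have "card V = card (\<Union>M)" using mp(2) by simp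
  also have "\<dots> = sum card M"
  proof (rule card_Union_disjoint)
    show "pairwise disjnt M" using mp(3) unfolding pairwise_def disjnt_def by blast
    show "\<And>A. A \<in> M \<Longrightarrow> finite A" using mp(1) assms(2) by (auto simp: all_edges_def intro: finite_subset)
  qed
  also have "\<dots> = sum (\<lambda>_. r) M" using mp(1) by (intro sum.cong) (auto simp: all_edges_def)
  also have "\<dots> = card M * r" by simp
  finally show "card V = card M * r" .
qed

lemma count_M:
  assumes finV: "finite V" and r1: "r \<ge> 1" and cV: "card V = r * n" and n1: "n \<ge> 1"
    and Mm: "is_matching V (all_edges V r) M"
  shows "real (card {xs \<in> permutations_of_set (all_edges V r). M \<subseteq> stopped_graph V xs})
     = real n * (\<Sum>i=1..r. (-1) ^ (i + 1) * real (r choose i) *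
          FF (card (all_edges V r)) n (card (all_edges V r) - (r * n - i choose r)))"
proof -
  define E where "E = all_edges V r"
  define P where "P = permutations_of_set E"
  define N where "N = card E"
  note mp = matching_props[OF Mm]
  note mc = matching_card[OF Mm finV]
  have finE: "finite E" using finV by (simp add: E_def finite_edges)
  have finP: "finite P" by (simp add: P_def)
  have cM: "card M = n" using mc cV r1 by simp
  have Mne: "M \<noteq> {}" using cM n1 by auto
  have U: "\<Union>E = V" unfolding E_def
    by (rule Union_edges[OF finV r1]) (use cV n1 in simp)
  define B where "B v = {xs \<in> P. \<forall>f\<in>E. v \<in> f \<longrightarrow> (\<forall>g\<in>M. pos xs g \<le> pos xs f)}" for v
  have BP: "B v \<subseteq> P" for v by (auto simp: B_def)
  have S1: "{xs \<in> P. M \<subseteq> stopped_graph V xs} = (\<Union>v\<in>V. B v)"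
    using char_stopped[of V r _ M] U mp(1) Mne mc(1) unfolding B_def P_def E_def by auto
  also have "\<dots> = (\<Union>e\<in>M. \<Union>v\<in>e. B v)" using mp(2) by blast
  finally have S12: "{xs \<in> P. M \<subseteq> stopped_graph V xs} = (\<Union>e\<in>M. \<Union>v\<in>e. B v)" .
  have disj: "(\<Union>v\<in>e. B v) \<inter> (\<Union>v\<in>e'. B v) = {}" if "e \<in> M" "e' \<in> M" "e \<noteq> e'" for e e'
  proof (rule ccontr)
    assume "(\<Union>v\<in>e. B v) \<inter> (\<Union>v\<in>e'. B v) \<noteq> {}"
    then obtain xs v v' where xs: "v \<in> e" "v' \<in> e'" "xs \<in> B v" "xs \<in> B v'" by blast
    have eE: "e \<in> E" "e' \<in> E" using that mp(1) by (auto simp: E_def)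
    have "pos xs e' \<le> pos xs e" using xs(1,3) eE that by (auto simp: B_def)
    moreover have "pos xs e \<le> pos xs e'" using xs(2,4) eE that by (auto simp: B_def)
    moreover have "set xs = E" using xs(3) by (auto simp: B_def P_def permutations_of_set_def)
    ultimately show False using pos_inj[of e xs e'] eE that by auto
  qed
  have finU: "finite (\<Union>v\<in>e. B v)" for e using BP finP by (meson UN_least finite_subset)
  have S3: "card (\<Union>e\<in>M. \<Union>v\<in>e. B v) = (\<Sum>e\<in>M. card (\<Union>v\<in>e. B v))"
    by (rule card_UN_disjoint) (use mc(1) disj finU in auto)
  define G where "G i = FF N n (N - (r * n - i choose r))" for i
  have S4: "real (card (\<Union>v\<in>e. B v)) = (\<Sum>i=1..r. (-1) ^ (i + 1) * real (r choose i) * G i)"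
    if eM: "e \<in> M" for e
  proof -
    have eE: "e \<in> E" using eM mp(1) by (auto simp: E_def)
    have fine: "finite e" and ce: "card e = r" and eV: "e \<subseteq> V"
      using eE finV by (auto simp: E_def all_edges_def intro: finite_subset)
    define f where "f X = real (card (X \<inter> P))" for X
    have add: "f (S \<union> T) = f S + f T" if "disjnt S T" for S T
    proof -
      have "(S \<union> T) \<inter> P = (S \<inter> P) \<union> (T \<inter> P)" by blast
      then show ?thesis unfolding f_def using that finP
        by (simp add: card_Un_disjoint disjnt_def Int_commute Int_left_commute inf_assoc)
    qed
    have IE: "f (\<Union>(B ` e)) = (\<Sum>S | S \<subseteq> e \<and> S \<noteq> {}. (-1) ^ (card S + 1) * f (\<Inter>(B ` S)))"
      by (rule Incl_Excl_UN[OF add fine])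
    have lhs: "f (\<Union>(B ` e)) = real (card (\<Union>v\<in>e. B v))"
      unfolding f_def using BP by (metis (no_types, lifting) UN_subset_iff inf.absorb_iff1)
    have trm: "f (\<Inter>(B ` S)) = G (card S)" if S: "S \<subseteq> e" "S \<noteq> {}" for S
    proof -
      define W where "W = {f \<in> E. f \<inter> S \<noteq> {}}"
      have inter: "\<Inter>(B ` S) = {xs \<in> P. PC xs M W}"
        using S unfolding B_def W_def PC_def by auto
      have "\<Inter>(B ` S) \<inter> P = \<Inter>(B ` S)" using inter by auto
      then have "f (\<Inter>(B ` S)) = real (card {xs \<in> P. PC xs M W})" unfolding f_def inter by simp
      also have "\<dots> = FF (card E) (card M) (card W)"
        unfolding P_def
      proof (rule count_order[OF finE])
        show "M \<subseteq> E" using mp(1) by (simp add: E_def)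
        show "W \<subseteq> E" by (auto simp: W_def)
        show "M \<inter> W = {e}"
        proof
          show "{e} \<subseteq> M \<inter> W" using eM eE S fine by (auto simp: W_def)
          show "M \<inter> W \<subseteq> {e}"
          proof
            fix g assume g: "g \<in> M \<inter> W"
            then obtain v where "v \<in> g" "v \<in> S" by (auto simp: W_def)
            then show "g \<in> {e}" using mp(3)[of e g v] g eM S by auto
          qed
        qed
      qed
      also have "card W = N - (r * n - card S choose r)"
      proof -
        have Wd: "W = E - all_edges (V - S) r" by (auto simp: W_def E_def all_edges_def)
        have sub: "all_edges (V - S) r \<subseteq> E" by (auto simp: E_def all_edges_def)
        have "card (all_edges (V - S) r) = card (V - S) choose r"
          using finV by (simp add: card_edges)
        moreover have "card (V - S) = r * n - card S"
          using S eV cV finV by (simp add: card_Diff_subset finite_subset)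
        ultimately show ?thesis
          unfolding Wd N_def using card_Diff_subset[OF finite_subset[OF sub finE] sub] by simp
      qed
      finally show ?thesis by (simp add: G_def N_def cM)
    qed
    have "real (card (\<Union>v\<in>e. B v)) = (\<Sum>S | S \<subseteq> e \<and> S \<noteq> {}. (-1) ^ (card S + 1) * G (card S))"
      unfolding lhs[symmetric] IE by (intro sum.cong) (auto simp: trm)
    also have "\<dots> = (\<Sum>i=1..r. real (r choose i) * ((-1) ^ (i + 1) * G i))"
      using sum_subsets_by_card[OF fine, of "\<lambda>i. (-1) ^ (i + 1) * G i"] ce by simp
    finally show ?thesis by (simp add: mult_ac)
  qed
  have "real (card {xs \<in> P. M \<subseteq> stopped_graph V xs}) = (\<Sum>e\<in>M. real (card (\<Union>v\<in>e. B v)))"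
    unfolding S12 S3 by simp
  also have "\<dots> = (\<Sum>e\<in>M. (\<Sum>i=1..r. (-1) ^ (i + 1) * real (r choose i) * G i))"
    by (rule sum.cong) (auto simp: S4)
  also have "\<dots> = real n * (\<Sum>i=1..r. (-1) ^ (i + 1) * real (r choose i) * G i)"
    using cM by simp
  finally show ?thesis unfolding P_def E_def G_def N_def .
qed



lemma pm_arith:
  assumes "r \<ge> 1"
  shows "real ((r * Suc n - 1) choose (r - 1)) * fact (r * n) * (fact r * (real n + 1)) = fact (r * Suc n)"
proof -
  obtain r0 where r: "r = Suc r0" using assms by (cases r) auto
  have e1: "r * Suc n - 1 = r * n + r0" using r by simp
  have b: "fact r0 * fact (r * n) * ((r * n + r0) choose r0) = (fact (r * n + r0) :: nat)"
    using binomial_fact_lemma[of r0 "r * n + r0"] by simp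
  then have b': "fact r0 * fact (r * n) * real ((r * n + r0) choose r0) = fact (r * n + r0)"
    by (metis of_nat_fact of_nat_mult)
  have e2: "r * Suc n = Suc (r * n + r0)" using r by simp
  have "fact (r * Suc n) = real (Suc (r * n + r0)) * fact (r * n + r0)"
    unfolding e2 by (simp add: fact_Suc)
  also have "real (Suc (r * n + r0)) = real r * (real n + 1)" using r by (simp add: algebra_simps)
  finally have f: "fact (r * Suc n) = real r * (real n + 1) * fact (r * n + r0)" .
  have fr: "(fact r :: real) = real r * fact r0" using r by (simp add: fact_Suc)
  show ?thesis unfolding e1 f fr b'[symmetric] using r by (simp add: mult_ac)
qed

lemma edges_empty: "r \<ge> 1 \<Longrightarrow> all_edges {} r = {}"
  by (auto simp: all_edges_def)

lemma card_pm:
  fixes V :: "'a set"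
  assumes "finite V" "r \<ge> 1" "card V = r * n"
  shows "real (card {M. is_matching V (all_edges V r) M}) * (fact r ^ n * fact n) = fact (r * n)"
  using assms
proof (induction n arbitrary: V)
  case 0
  then have V: "V = {}" by simp
  have "{M. is_matching V (all_edges V r) M} = {{}}"
    using 0 by (auto simp: V edges_empty is_matching_def)
  then show ?case by simp
next
  case (Suc n)
  note finV = \<open>finite V\<close> and r1 = \<open>r \<ge> 1\<close>
  define PM where "PM (U::'a set) = {M. is_matching U (all_edges U r) M}" for U
  have "V \<noteq> {}" using Suc.prems r1 by auto
  then obtain v0 where v0: "v0 \<in> V" by blast
  define Ev where "Ev = {e \<in> all_edges V r. v0 \<in> e}"
  have eV: "e \<subseteq> V" "card e = r" "finite e" if "e \<in> Ev" for e
    using that finV by (auto simp: Ev_def all_edges_def intro: finite_subset)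
  have notin: "e \<notin> M" if "e \<in> Ev" "M \<in> PM (V - e)" for e M
  proof
    assume "e \<in> M"
    then have "e \<subseteq> V - e" using that(2) by (auto simp: PM_def is_matching_def all_edges_def)
    then have "e = {}" by blast
    then show False using eV[OF that(1)] r1 by simp
  qed
  have split: "PM V = (\<Union>e\<in>Ev. insert e ` PM (V - e))"
  proof
    show "PM V \<subseteq> (\<Union>e\<in>Ev. insert e ` PM (V - e))"
    proof
      fix M assume M: "M \<in> PM V"
      then have Mm: "is_matching V (all_edges V r) M" by (simp add: PM_def)
      note mp = matching_props[OF Mm]
      obtain e where e: "e \<in> M" "v0 \<in> e" using mp(2) v0 by blast
      have eEv: "e \<in> Ev" using e mp(1) by (auto simp: Ev_def)
      have "M - {e} \<in> PM (V - e)"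
        unfolding PM_def is_matching_def
      proof (intro CollectI conjI ballI)
        show "M - {e} \<subseteq> all_edges (V - e) r"
        proof
          fix g assume g: "g \<in> M - {e}"
          then have "g \<inter> e = {}" using mp(3)[of g e] e by auto
          then show "g \<in> all_edges (V - e) r" using g mp(1) by (auto simp: all_edges_def)
        qed
        fix v assume v: "v \<in> V - e"
        then obtain g where g: "g \<in> M" "v \<in> g" using mp(2) by blast
        then have "g \<noteq> e" using v by auto
        then show "\<exists>!g. g \<in> M - {e} \<and> v \<in> g" using g mp(3) by blast
      qed
      moreover have "M = insert e (M - {e})" using e by auto
      ultimately show "M \<in> (\<Union>e\<in>Ev. insert e ` PM (V - e))" using eEv by blast
    qed
  next
    show "(\<Union>e\<in>Ev. insert e ` PM (V - e)) \<subseteq> PM V"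
    proof
      fix M assume "M \<in> (\<Union>e\<in>Ev. insert e ` PM (V - e))"
      then obtain e M' where e: "e \<in> Ev" and M': "M' \<in> PM (V - e)" and MM: "M = insert e M'" by blast
      have M'm: "is_matching (V - e) (all_edges (V - e) r) M'" using M' by (simp add: PM_def)
      have M'sub: "g \<subseteq> V - e" "card g = r" if "g \<in> M'" for g
        using M'm that by (auto simp: is_matching_def all_edges_def)
      show "M \<in> PM V"
        unfolding PM_def is_matching_def MM
      proof (intro CollectI conjI ballI)
        show "insert e M' \<subseteq> all_edges V r"
          using e M'sub by (auto simp: Ev_def all_edges_def)
        fix v assume v: "v \<in> V"
        show "\<exists>!g. g \<in> insert e M' \<and> v \<in> g"
        proof (cases "v \<in> e")
          case True
          then show ?thesis using M'sub by blast
        next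
          case False
          then have "v \<in> V - e" using v by blast
          then have "\<exists>!g. g \<in> M' \<and> v \<in> g" using M'm by (simp add: is_matching_def)
          then show ?thesis using False by blast
        qed
      qed
    qed
  qed
  have cVe: "card (V - e) = r * n" if "e \<in> Ev" for e
    using eV[OF that] Suc.prems by (simp add: card_Diff_subset)
  have IH: "real (card (PM (V - e))) * (fact r ^ n * fact n) = fact (r * n)" if "e \<in> Ev" for e
    unfolding PM_def using Suc.IH[of "V - e"] finV r1 cVe[OF that] by simp
  have finPM: "finite (PM U)" if "finite U" for U
  proof -
    have "PM U \<subseteq> Pow (all_edges U r)" by (auto simp: PM_def is_matching_def)
    then show ?thesis using finite_edges[OF that] by (meson finite_Pow_iff finite_subset)
  qed
  have finEv: "finite Ev" using finite_edges[OF finV] by (simp add: Ev_def)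
  have "card (PM V) = (\<Sum>e\<in>Ev. card (insert e ` PM (V - e)))"
    unfolding split
  proof (rule card_UN_disjoint)
    show "finite Ev" by (rule finEv)
    show "\<forall>e\<in>Ev. finite (insert e ` PM (V - e))" using finPM finV by simp
    show "\<forall>e\<in>Ev. \<forall>e'\<in>Ev. e \<noteq> e' \<longrightarrow> insert e ` PM (V - e) \<inter> insert e' ` PM (V - e') = {}"
    proof (intro ballI impI)
      fix e e' assume a: "e \<in> Ev" "e' \<in> Ev" "e \<noteq> e'"
      show "insert e ` PM (V - e) \<inter> insert e' ` PM (V - e') = {}"
      proof (rule ccontr)
        assume "insert e ` PM (V - e) \<inter> insert e' ` PM (V - e') \<noteq> {}"
        then obtain M1 M2 where M: "M1 \<in> PM (V - e)" "M2 \<in> PM (V - e')" "insert e M1 = insert e' M2" by blast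
        then have "e \<in> M2" using a by blast
        then have "e \<subseteq> V - e'" using M(2) by (auto simp: PM_def is_matching_def all_edges_def)
        moreover have "v0 \<in> e" "v0 \<in> e'" using a by (auto simp: Ev_def)
        ultimately show False by blast
      qed
    qed
  qed
  also have "\<dots> = (\<Sum>e\<in>Ev. card (PM (V - e)))"
  proof (rule sum.cong[OF refl], rule card_image)
    fix e assume e: "e \<in> Ev"
    show "inj_on (insert e) (PM (V - e))"
      using notin[OF e] by (auto simp: inj_on_def insert_ident)
  qed
  finally have cPM: "card (PM V) = (\<Sum>e\<in>Ev. card (PM (V - e)))" .
  have cEv: "card Ev = (r * Suc n - 1) choose (r - 1)"
  proof -
    have "Ev = insert v0 ` {T. T \<subseteq> V - {v0} \<and> card T = r - 1}"
    proof
      show "Ev \<subseteq> insert v0 ` {T. T \<subseteq> V - {v0} \<and> card T = r - 1}"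
      proof
        fix e assume e: "e \<in> Ev"
        then have "e = insert v0 (e - {v0})" "e - {v0} \<subseteq> V - {v0}" "card (e - {v0}) = r - 1"
          using eV[OF e] by (auto simp: Ev_def)
        then show "e \<in> insert v0 ` {T. T \<subseteq> V - {v0} \<and> card T = r - 1}" by blast
      qed
      show "insert v0 ` {T. T \<subseteq> V - {v0} \<and> card T = r - 1} \<subseteq> Ev"
      proof
        fix e assume "e \<in> insert v0 ` {T. T \<subseteq> V - {v0} \<and> card T = r - 1}"
        then obtain T where T: "T \<subseteq> V - {v0}" "card T = r - 1" "e = insert v0 T" by blast
        have "finite T" using T finV finite_subset by blast
        moreover have "v0 \<notin> T" using T by blast
        ultimately have "card e = r" using T r1 by simp
        then show "e \<in> Ev" using T v0 by (auto simp: Ev_def all_edges_def)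
      qed
    qed
    moreover have "inj_on (insert v0) {T. T \<subseteq> V - {v0} \<and> card T = r - 1}"
      by (auto simp: inj_on_def insert_ident)
    ultimately have "card Ev = card {T. T \<subseteq> V - {v0} \<and> card T = r - 1}"
      by (simp add: card_image)
    also have "\<dots> = card (V - {v0}) choose (r - 1)" using finV by (simp add: n_subsets)
    finally show ?thesis using Suc.prems v0 by simp
  qed
  define Y where "Y = fact (r * n) / (fact r ^ n * fact n :: real)"
  have pos: "(fact r ^ n * fact n :: real) > 0" by simp
  have "real (card (PM (V - e))) = Y" if "e \<in> Ev" for e
    using IH[OF that] pos unfolding Y_def by (simp add: field_simps)
  then have "real (card (PM V)) = real (card Ev) * Y"
    unfolding cPM by (simp add: of_nat_sum)
  then have H: "real (card (PM V)) * (fact r ^ n * fact n) = real ((r * Suc n - 1) choose (r - 1)) * fact (r * n)"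
    unfolding cEv Y_def using pos by (simp add: field_simps)
  have "real (card (PM V)) * (fact r ^ Suc n * fact (Suc n))
      = (real (card (PM V)) * (fact r ^ n * fact n)) * (fact r * (real n + 1))"
    by (simp add: fact_Suc algebra_simps)
  also have "\<dots> = real ((r * Suc n - 1) choose (r - 1)) * fact (r * n) * (fact r * (real n + 1))"
    unfolding H ..
  also have "\<dots> = fact (r * Suc n)" by (rule pm_arith[OF r1])
  finally show ?case by (simp add: PM_def)
qed



lemma double_count:
  assumes "finite A" "finite B"
  shows "(\<Sum>a\<in>A. card {b\<in>B. R a b}) = (\<Sum>b\<in>B. card {a\<in>A. R a b})"
proof -
  have c1: "card {b\<in>B. R a b} = (\<Sum>b\<in>B. if R a b then 1 else 0)" for a
    using sum.inter_filter[OF assms(2), of "\<lambda>_. 1::nat" "R a"] by simp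
  have c2: "card {a\<in>A. R a b} = (\<Sum>a\<in>A. if R a b then 1 else 0)" for b
    using sum.inter_filter[OF assms(1), of "\<lambda>_. 1::nat" "\<lambda>a. R a b"] by simp
  show ?thesis unfolding c1 c2 by (rule sum.swap)
qed

lemma FF_binom:
  assumes "n \<ge> 1" "w \<ge> 1"
  shows "real n * FF N n w / fact N = 1 / real ((w + n - 1) choose n)"
proof -
  have b: "fact n * fact (w + n - 1 - n) * ((w + n - 1) choose n) = (fact (w + n - 1) :: nat)"
    using binomial_fact_lemma[of n "w + n - 1"] assms by simp
  have e: "w + n - 1 - n = w - 1" using assms by simp
  have b': "fact n * fact (w - 1) * real ((w + n - 1) choose n) = fact (w + n - 1)"
    using arg_cong[OF b, of real] unfolding e by simp
  obtain n0 where n0: "n = Suc n0" using assms by (cases n) auto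
  have fn: "real n * fact (n - 1) = fact n" unfolding n0 by (simp add: fact_Suc)
  have "real n * FF N n w / fact N = fact n * fact (w - 1) / fact (w + n - 1)"
    unfolding FF_def using fn by (simp add: field_simps add.commute)
  also have "\<dots> = 1 / real ((w + n - 1) choose n)"
    unfolding b'[symmetric] by (simp add: field_simps)
  finally show ?thesis .
qed

lemma binom_less:
  fixes V :: "'a set"
  assumes finV: "finite V" and r1: "r \<ge> 1" and i: "1 \<le> i" "i \<le> r" and rV: "r \<le> card V"
  shows "(card V - i) choose r < card (all_edges V r)"
proof -
  obtain S where S: "S \<subseteq> V" "card S = i" using i rV by (meson obtain_subset_with_card_n order_trans)
  then obtain s where s: "s \<in> S" using i by fastforce
  obtain e where e: "e \<in> all_edges V r" "s \<in> e" using edges_cover[OF finV r1 rV] s S by blast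
  have sub: "all_edges (V - S) r \<subset> all_edges V r"
    using e s by (auto simp: all_edges_def)
  have "card (all_edges (V - S) r) < card (all_edges V r)"
    by (rule psubset_card_mono[OF finite_edges[OF finV] sub])
  moreover have "card (all_edges (V - S) r) = (card V - i) choose r"
    using finV S by (simp add: card_edges card_Diff_subset finite_subset)
  ultimately show ?thesis by simp
qed

theorem theorem3:
  fixes V :: "'a set" and r n :: nat
  assumes "r \<ge> 2" and "n \<ge> 1" and "finite V" and "card V = r * n"
  shows "measure_pmf.expectation (pmf_of_set (permutations_of_set (all_edges V r)))
           (\<lambda>xs. real (num_matchings V (stopped_graph V xs)))
         = fact (r * n) / ((fact r) ^ n * fact n) *
           (\<Sum>i = 1..r. (-1) ^ (i - 1) * real (r choose i) /
              real (((n * r choose r) - (n * r - i choose r) + n - 1) choose n))"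
proof -
  note finV = \<open>finite V\<close> and cV = \<open>card V = r * n\<close> and n1 = \<open>n \<ge> 1\<close>
  have r1: "r \<ge> 1" using assms by simp
  have rV: "r \<le> card V" using cV n1 by simp
  define E where "E = all_edges V r"
  define P where "P = permutations_of_set E"
  define N where "N = card E"
  define PM where "PM = {M. is_matching V E M}"
  have finE: "finite E" using finV by (simp add: E_def finite_edges)
  have finP: "finite P" and Pne: "P \<noteq> {}" using finE by (auto simp: P_def)
  have cP: "card P = fact N" using finE by (simp add: P_def N_def)
  have finPM: "finite PM"
  proof -
    have "PM \<subseteq> Pow E" by (auto simp: PM_def is_matching_def)
    then show ?thesis using finE by (meson finite_Pow_iff finite_subset)
  qed
  have NN: "N = (n * r) choose r" using finV cV by (simp add: N_def E_def card_edges mult.commute)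
  define K where "K = real n * (\<Sum>i=1..r. (-1) ^ (i + 1) * real (r choose i) * FF N n (N - (r * n - i choose r)))"
  have cntM: "real (card {xs \<in> P. M \<subseteq> stopped_graph V xs}) = K" if "M \<in> PM" for M
    using count_M[OF finV r1 cV n1, of M] that unfolding K_def P_def E_def N_def PM_def by simp
  have nm: "num_matchings V (stopped_graph V xs) = card {M \<in> PM. M \<subseteq> stopped_graph V xs}" if "xs \<in> P" for xs
  proof -
    have "stopped_graph V xs \<subseteq> E" using that
      by (auto simp: stopped_graph_def P_def permutations_of_set_def dest: in_set_takeD)
    then have "{M. is_matching V (stopped_graph V xs) M} = {M \<in> PM. M \<subseteq> stopped_graph V xs}"
      by (auto simp: PM_def is_matching_def)
    then show ?thesis by (simp add: num_matchings_def)
  qed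
  have "measure_pmf.expectation (pmf_of_set P) (\<lambda>xs. real (num_matchings V (stopped_graph V xs)))
      = (\<Sum>xs\<in>P. real (num_matchings V (stopped_graph V xs))) / real (card P)"
    by (rule integral_pmf_of_set[OF Pne finP])
  also have "(\<Sum>xs\<in>P. real (num_matchings V (stopped_graph V xs))) = real (\<Sum>xs\<in>P. card {M \<in> PM. M \<subseteq> stopped_graph V xs})"
    by (simp add: nm of_nat_sum)
  also have "(\<Sum>xs\<in>P. card {M \<in> PM. M \<subseteq> stopped_graph V xs}) = (\<Sum>M\<in>PM. card {xs \<in> P. M \<subseteq> stopped_graph V xs})"
    by (rule double_count[OF finP finPM])
  also have "real \<dots> = (\<Sum>M\<in>PM. K)" by (simp add: of_nat_sum cntM)
  also have "\<dots> = real (card PM) * K" by simp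
  finally have ex: "measure_pmf.expectation (pmf_of_set P) (\<lambda>xs. real (num_matchings V (stopped_graph V xs)))
      = real (card PM) * K / fact N" using cP by simp
  have cPM: "real (card PM) = fact (r * n) / (fact r ^ n * fact n)"
    using card_pm[OF finV r1 cV] unfolding PM_def E_def by (simp add: field_simps)
  have KN: "K / fact N = (\<Sum>i=1..r. (-1) ^ (i - 1) * real (r choose i) /
              real (((n * r choose r) - (n * r - i choose r) + n - 1) choose n))"
  proof -
    have KN: "K / fact N = (\<Sum>i=1..r. (-1) ^ (i + 1) * real (r choose i) * (real n * FF N n (N - (r * n - i choose r)) / fact N))"
      unfolding K_def by (simp add: sum_divide_distrib sum_distrib_left mult_ac)
    also have "\<dots> = (\<Sum>i=1..r. (-1) ^ (i - 1) * real (r choose i) /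
              real (((n * r choose r) - (n * r - i choose r) + n - 1) choose n))"
    proof (rule sum.cong[OF refl])
      fix i assume i: "i \<in> {1..r}"
      have lt: "(r * n - i) choose r < N"
        using binom_less[OF finV r1 _ _ rV, of i] i cV by (simp add: N_def E_def)
      then have w1: "N - (r * n - i choose r) \<ge> 1" by simp
      have "real n * FF N n (N - (r * n - i choose r)) / fact N = 1 / real ((N - (r * n - i choose r) + n - 1) choose n)"
        by (rule FF_binom[OF n1 w1])
      moreover have "(-1::real) ^ (i + 1) = (-1) ^ (i - 1)"
      proof -
        obtain i0 where "i = Suc i0" using i by (cases i) auto
        then show ?thesis by simp
      qed
      ultimately show "(-1) ^ (i + 1) * real (r choose i) * (real n * FF N n (N - (r * n - i choose r)) / fact N)
          = (-1) ^ (i - 1) * real (r choose i) / real (((n * r choose r) - (n * r - i choose r) + n - 1) choose n)"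
        using NN by (simp add: mult.commute)
    qed
    finally show ?thesis .
  qed
  have ex2: "measure_pmf.expectation (pmf_of_set (permutations_of_set (all_edges V r)))
           (\<lambda>xs. real (num_matchings V (stopped_graph V xs))) = real (card PM) * (K / fact N)"
    using ex unfolding P_def E_def by simp
  show ?thesis unfolding ex2 KN cPM ..
qed

end
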